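(* Let $b_0,b_1,\ldots,b_p\in\mathbb R^n$ and $-\infty\le l_i\le u_i\le+\infty$ for $i=1,\ldots,p$. Consider \[ {\rm (U)}\quad \max_{x\in\mathbb R^n}\ x^Tx+b_0^Tx\quad \text{s.t.}\quad l_i\le x^Tx+2b_i^Tx\le u_i,\ i=1,\ldots,p, \] and the second-order cone programming relaxation \[ {\rm (S)}\quad \max_{x\in\mathbb R^n,\,t\in\mathbb R}\ t+b_0^Tx\quad \text{s.t.}\quad l_i\le t+2b_i^Tx\le u_i,\ i=1,\ldots,p,\qquad \left\|\begin{pmatrix} x\\ \frac{t-1}{2}\end{pmatrix}\right\|\le \frac{t+1}{2}. \] Suppose that either ${\rm rank}[b_1,\ldots,b_p]\le n-1$ or $p=n$. Then (U) is equivalent to (S), in the sense that $x^*$ globally solves (U) if and only if $(x^*,t^* ):=(x^*,x^{*T}x^* )$ globally solves (S).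
   Context: $\|\cdot\|$ is the Euclidean norm. *)

theory Defs
  imports "HOL-Analysis.Analysis" "HOL-Library.Extended_Real"
begin

definition feasible_U :: "nat \<Rightarrow> (nat \<Rightarrow> real^'n) \<Rightarrow> (nat \<Rightarrow> ereal) \<Rightarrow> (nat \<Rightarrow> ereal) \<Rightarrow> real^'n \<Rightarrow> bool" where
  "feasible_U p b l u x \<longleftrightarrow>
     (\<forall>i\<in>{1..p}. l i \<le> ereal (x \<bullet> x + 2 * (b i \<bullet> x)) \<and> ereal (x \<bullet> x + 2 * (b i \<bullet> x)) \<le> u i)"

definition obj_U :: "(nat \<Rightarrow> real^'n) \<Rightarrow> real^'n \<Rightarrow> real" where
  "obj_U b x = x \<bullet> x + b 0 \<bullet> x"

definition solves_U :: "nat \<Rightarrow> (nat \<Rightarrow> real^'n) \<Rightarrow> (nat \<Rightarrow> ereal) \<Rightarrow> (nat \<Rightarrow> ereal) \<Rightarrow> real^'n \<Rightarrow> bool" where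
  "solves_U p b l u x \<longleftrightarrow> feasible_U p b l u x \<and>
     (\<forall>y. feasible_U p b l u y \<longrightarrow> obj_U b y \<le> obj_U b x)"

text \<open>Feasible set of (S); the norm of the pair (x, (t-1)/2) is the Euclidean norm on R^(n+1).\<close>
definition feasible_S :: "nat \<Rightarrow> (nat \<Rightarrow> real^'n) \<Rightarrow> (nat \<Rightarrow> ereal) \<Rightarrow> (nat \<Rightarrow> ereal) \<Rightarrow> real^'n \<Rightarrow> real \<Rightarrow> bool" where
  "feasible_S p b l u x t \<longleftrightarrow>
     (\<forall>i\<in>{1..p}. l i \<le> ereal (t + 2 * (b i \<bullet> x)) \<and> ereal (t + 2 * (b i \<bullet> x)) \<le> u i) \<and>
     norm (x, (t - 1) / 2) \<le> (t + 1) / 2"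

definition obj_S :: "(nat \<Rightarrow> real^'n) \<Rightarrow> real^'n \<Rightarrow> real \<Rightarrow> real" where
  "obj_S b x t = t + b 0 \<bullet> x"

definition solves_S :: "nat \<Rightarrow> (nat \<Rightarrow> real^'n) \<Rightarrow> (nat \<Rightarrow> ereal) \<Rightarrow> (nat \<Rightarrow> ereal) \<Rightarrow> real^'n \<Rightarrow> real \<Rightarrow> bool" where
  "solves_S p b l u x t \<longleftrightarrow> feasible_S p b l u x t \<and>
     (\<forall>y s. feasible_S p b l u y s \<longrightarrow> obj_S b y s \<le> obj_S b x t)"

definition rank_cols :: "nat \<Rightarrow> (nat \<Rightarrow> real^'n) \<Rightarrow> nat" where
  "rank_cols p b = dim (span (b ` {1..p}))"

end

theory Submission
  imports Defs
begin

lemma sq_id: "((t+1)/2)^2 = ((t-1)/2)^2 + (t::real)"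
  by (simp add: power2_eq_square field_simps)

lemma soc_iff:
  fixes x :: "real^'n"
  shows "norm (x, (t - 1) / 2) \<le> (t + 1) / 2 \<longleftrightarrow> x \<bullet> x \<le> t"
proof -
  have nx: "(norm x)^2 = x \<bullet> x" by (simp add: power2_norm_eq_inner)
  have eq: "norm (x, (t - 1) / 2) = sqrt (x \<bullet> x + ((t-1)/2)^2)"
  proof -
    have "(norm ((t-1)/2::real))^2 = ((t-1)/2)^2" by (simp only: real_norm_def power2_abs)
    then show ?thesis by (simp only: norm_Pair nx)
  qed
  have xx: "0 \<le> x \<bullet> x" by simp
  show ?thesis
  proof
    assume h: "norm (x, (t - 1) / 2) \<le> (t + 1) / 2"
    have "0 \<le> (t+1)/2" using h norm_ge_zero order_trans by blast
    then have "x \<bullet> x + ((t-1)/2)^2 \<le> ((t+1)/2)^2"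
    proof -
      have A0: "0 \<le> x \<bullet> x + ((t-1)/2)^2" using xx by simp
      have "(sqrt (x \<bullet> x + ((t-1)/2)^2))^2 \<le> ((t+1)/2)^2"
        using h unfolding eq by (intro power_mono) auto
      then show ?thesis using real_sqrt_pow2[OF A0] by simp
    qed
    then show "x \<bullet> x \<le> t" unfolding sq_id by simp
  next
    assume h: "x \<bullet> x \<le> t"
    then have "0 \<le> t" using xx by linarith
    then have t0: "0 \<le> (t+1)/2" by simp
    have "x \<bullet> x + ((t-1)/2)^2 \<le> ((t+1)/2)^2"
      using h unfolding sq_id by simp
    then show "norm (x, (t - 1) / 2) \<le> (t + 1) / 2"
      unfolding eq by (rule real_le_lsqrt[OF t0])
  qed
qed

lemma root_exists:
  fixes a beta gam :: real
  assumes "a > 0" "gam \<le> 0"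
  shows "\<exists>lam. lam \<ge> 0 \<and> a * lam^2 + 2 * beta * lam + gam = 0"
    and "\<exists>lam. lam \<le> 0 \<and> a * lam^2 + 2 * beta * lam + gam = 0"
proof -
  define D where "D = beta^2 - a * gam"
  have D0: "D \<ge> beta^2" using assms unfolding D_def by (simp add: mult_nonneg_nonpos)
  define r where "r = sqrt D"
  have r2: "r^2 = D" unfolding r_def using D0 by (simp add: order_trans[OF zero_le_power2])
  have rb: "\<bar>beta\<bar> \<le> r" unfolding r_def using D0 real_sqrt_abs real_sqrt_le_mono by metis
  have key: "\<And>s. s = r \<or> s = -r \<Longrightarrow> a * ((s - beta)/a)^2 + 2 * beta * ((s - beta)/a) + gam = 0"
  proof -
    fix s assume "s = r \<or> s = -r"
    then have s2: "s^2 = D" using r2 by auto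
    have "a * ((s - beta)/a)^2 + 2 * beta * ((s - beta)/a) = (s^2 - beta^2)/a"
      using assms(1) by (simp add: power2_eq_square field_simps)
    also have "\<dots> = - gam" using s2 assms(1) unfolding D_def by simp
    finally show "a * ((s - beta)/a)^2 + 2 * beta * ((s - beta)/a) + gam = 0" by simp
  qed
  show "\<exists>lam. lam \<ge> 0 \<and> a * lam^2 + 2 * beta * lam + gam = 0"
    apply (rule exI[of _ "(r - beta)/a"]) using key[of r] rb assms(1) by auto
  show "\<exists>lam. lam \<le> 0 \<and> a * lam^2 + 2 * beta * lam + gam = 0"
    apply (rule exI[of _ "(-r - beta)/a"]) using key[of "-r"] rb assms(1)
    by (auto simp: divide_nonpos_pos)
qed

lemma main_dir:
  fixes b :: "nat \<Rightarrow> real^'n" and d :: "real^'n"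
  assumes d0: "d \<noteq> 0" and dc: "\<forall>i\<in>{1..p}. b i \<bullet> d = c"
    and U: "solves_U p b l u xs"
  shows "solves_S p b l u xs (xs \<bullet> xs)"
  unfolding solves_S_def
proof (intro conjI allI impI)
  have fU: "feasible_U p b l u xs" using U solves_U_def by blast
  then show "feasible_S p b l u xs (xs \<bullet> xs)"
    unfolding feasible_S_def feasible_U_def soc_iff by simp
  fix y s assume fS: "feasible_S p b l u y s"
  then have lin: "\<forall>i\<in>{1..p}. l i \<le> ereal (s + 2 * (b i \<bullet> y)) \<and> ereal (s + 2 * (b i \<bullet> y)) \<le> u i"
    and ys: "y \<bullet> y \<le> s"
    unfolding feasible_S_def soc_iff by auto
  have a0: "d \<bullet> d > 0" using d0 by simp
  have g0: "y \<bullet> y - s \<le> 0" using ys by simp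
  obtain lam where lam1: "lam * (b 0 \<bullet> d - 2 * c) \<ge> 0"
    and lam2: "(d \<bullet> d) * lam^2 + 2 * (y \<bullet> d + c) * lam + (y \<bullet> y - s) = 0"
  proof (cases "b 0 \<bullet> d - 2 * c \<ge> 0")
    case True
    from root_exists(1)[OF a0 g0, of "y \<bullet> d + c"] obtain lam where
      h1: "lam \<ge> 0" and h2: "(d \<bullet> d) * lam^2 + 2 * (y \<bullet> d + c) * lam + (y \<bullet> y - s) = 0" by blast
    have "lam * (b 0 \<bullet> d - 2 * c) \<ge> 0" using h1 True by (rule mult_nonneg_nonneg)
    from that[OF this h2] show ?thesis .
  next
    case False
    from root_exists(2)[OF a0 g0, of "y \<bullet> d + c"] obtain lam where
      h1: "lam \<le> 0" and h2: "(d \<bullet> d) * lam^2 + 2 * (y \<bullet> d + c) * lam + (y \<bullet> y - s) = 0" by blast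
    have "b 0 \<bullet> d - 2 * c \<le> 0" using False by linarith
    with h1 have "lam * (b 0 \<bullet> d - 2 * c) \<ge> 0" by (rule mult_nonpos_nonpos)
    from that[OF this h2] show ?thesis .
  qed
  define z where "z = y + lam *\<^sub>R d"
  have zz: "z \<bullet> z = s - 2 * c * lam"
  proof -
    have e1: "z \<bullet> z = y \<bullet> y + lam * (y \<bullet> d) + lam * (d \<bullet> y) + lam * (lam * (d \<bullet> d))"
      unfolding z_def by (simp add: inner_add_left inner_add_right distrib_left)
    have "z \<bullet> z = y \<bullet> y + 2 * lam * (y \<bullet> d) + lam^2 * (d \<bullet> d)"
      unfolding e1 inner_commute[of d y] by (simp add: power2_eq_square)
    then show ?thesis using lam2 by (simp add: algebra_simps power2_eq_square)
  qed
  have cons: "\<forall>i\<in>{1..p}. z \<bullet> z + 2 * (b i \<bullet> z) = s + 2 * (b i \<bullet> y)"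
  proof
    fix i assume i: "i \<in> {1..p}"
    have "b i \<bullet> z = b i \<bullet> y + lam * c" unfolding z_def using dc i
      by (simp add: inner_add_right)
    then show "z \<bullet> z + 2 * (b i \<bullet> z) = s + 2 * (b i \<bullet> y)" using zz by (simp add: algebra_simps)
  qed
  have fz: "feasible_U p b l u z" unfolding feasible_U_def using cons lin by simp
  have "obj_U b z \<le> obj_U b xs" using U fz unfolding solves_U_def by blast
  moreover have "obj_U b z = s + b 0 \<bullet> y + lam * (b 0 \<bullet> d - 2 * c)"
  proof -
    have "b 0 \<bullet> z = b 0 \<bullet> y + lam * (b 0 \<bullet> d)" unfolding z_def by (simp add: inner_add_right)
    then show ?thesis unfolding obj_U_def zz by (simp add: right_diff_distrib)
  qed
  ultimately show "obj_S b y s \<le> obj_S b xs (xs \<bullet> xs)"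
    unfolding obj_S_def obj_U_def using lam1 by simp
qed

lemma other_dir:
  assumes S: "solves_S p b l u xs (xs \<bullet> xs)"
  shows "solves_U p b l u xs"
  unfolding solves_U_def
proof (intro conjI allI impI)
  have "feasible_S p b l u xs (xs \<bullet> xs)" using S unfolding solves_S_def by (rule conjunct1)
  then show "feasible_U p b l u xs" unfolding feasible_S_def feasible_U_def by (rule conjunct1)
  fix y assume fy: "feasible_U p b l u y"
  have "feasible_S p b l u y (y \<bullet> y)" unfolding feasible_S_def soc_iff
    using fy unfolding feasible_U_def by simp
  then have "obj_S b y (y \<bullet> y) \<le> obj_S b xs (xs \<bullet> xs)" using S unfolding solves_S_def by blast
  then show "obj_U b y \<le> obj_U b xs" unfolding obj_S_def obj_U_def .
qed

theorem theorem1: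
  fixes p :: nat and b :: "nat \<Rightarrow> real^'n" and l u :: "nat \<Rightarrow> ereal" and xs :: "real^'n"
  assumes "\<forall>i\<in>{1..p}. l i \<le> u i"
    and "rank_cols p b \<le> CARD('n) - 1 \<or> p = CARD('n)"
  shows "solves_U p b l u xs \<longleftrightarrow> solves_S p b l u xs (xs \<bullet> xs)"
proof -
  have "\<exists>d c. d \<noteq> 0 \<and> (\<forall>i\<in>{1..p}. b i \<bullet> d = c)"
  proof (cases "rank_cols p b \<le> CARD('n) - 1")
    case True
    have c0: "CARD('n) > 0" by simp
    have "rank_cols p b = dim (b ` {1..p})" unfolding rank_cols_def by (rule dim_span)
    then have "dim (b ` {1..p}) < CARD('n)"
      using True c0 by arith
    then have dl: "dim (b ` {1..p}) < DIM(real^'n)" by simp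
    obtain d :: "real^'n" where d0: "d \<noteq> 0" and od: "\<And>y. y \<in> span (b ` {1..p}) \<Longrightarrow> orthogonal d y"
      apply (rule orthogonal_to_subspace_exists[OF dl]) by blast
    have "\<forall>i\<in>{1..p}. b i \<bullet> d = 0"
    proof
      fix i assume "i \<in> {1..p}"
      then have "b i \<in> span (b ` {1..p})" by (intro span_base imageI)
      then have "orthogonal d (b i)" by (rule od)
      then show "b i \<bullet> d = 0" unfolding orthogonal_def by (simp add: inner_commute)
    qed
    then show ?thesis using d0 by blast
  next
    case False
    then have p: "p = CARD('n)" using assms(2) by simp
    define S where "S = (\<lambda>i. b i - b 1) ` {2..p}"
    have "dim S \<le> card S" by (rule dim_le_card) (auto simp: S_def span_base)
    also have "\<dots> \<le> card {2..p}" unfolding S_def by (rule card_image_le) simp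
    also have "\<dots> < DIM(real^'n)" using p by simp
    finally have dl: "dim S < DIM(real^'n)" .
    obtain d :: "real^'n" where d0: "d \<noteq> 0" and od: "\<And>y. y \<in> span S \<Longrightarrow> orthogonal d y"
      apply (rule orthogonal_to_subspace_exists[OF dl]) by blast
    have o: "\<forall>i\<in>{2..p}. (b i - b 1) \<bullet> d = 0"
    proof
      fix i assume "i \<in> {2..p}"
      then have "b i - b 1 \<in> span S" unfolding S_def by (intro span_base imageI)
      then have "orthogonal d (b i - b 1)" by (rule od)
      then show "(b i - b 1) \<bullet> d = 0" unfolding orthogonal_def by (simp only: inner_commute)
    qed
    have "\<forall>i\<in>{1..p}. b i \<bullet> d = b 1 \<bullet> d"
    proof
      fix i assume "i \<in> {1..p}"
      then have "i = 1 \<or> i \<in> {2..p}" by auto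
      then show "b i \<bullet> d = b 1 \<bullet> d" using o by (auto simp: inner_diff_left)
    qed
    then show ?thesis using d0 by blast
  qed
  then obtain d c where d0: "d \<noteq> 0" and dc: "\<forall>i\<in>{1..p}. b i \<bullet> d = c" by blast
  show ?thesis using main_dir[OF d0 dc] other_dir by blast
qed

end
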